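(* Let $\gamma=(1+\sqrt5)/2$ and let $(r_i)_{i\ge0}$ be a sequence of positive real numbers. Suppose there are constants $c_1,c_2>0$ such that $c_1r_ir_{i+1}\le r_{i+2}\le c_2r_ir_{i+1}$ for all $i\ge0$. Then there are constants $c_3,c_4>0$ such that $c_3r_i^\gamma\le r_{i+1}\le c_4r_i^\gamma$ for all $i\ge0$. *)

theory Defs
  imports Complex_Main
begin

end

theory Submission
  imports Defs
begin

theorem lemma5p2:
  fixes r :: "nat \<Rightarrow> real" and c1 c2 :: real
  assumes pos: "\<And>i. r i > 0"
    and c1: "c1 > 0" and c2: "c2 > 0"
    and rec: "\<And>i. c1 * r i * r (Suc i) \<le> r (Suc (Suc i)) \<and> r (Suc (Suc i)) \<le> c2 * r i * r (Suc i)"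
  shows "\<exists>c3 c4. c3 > 0 \<and> c4 > 0 \<and>
           (\<forall>i. c3 * r i powr ((1 + sqrt 5) / 2) \<le> r (Suc i) \<and>
                r (Suc i) \<le> c4 * r i powr ((1 + sqrt 5) / 2))"
proof -
  define g :: real where "g = (1 + sqrt 5) / 2"
  have s5: "sqrt 5 * sqrt 5 = 5" by simp
  have s5g: "sqrt 5 > 2" by (rule real_less_rsqrt) simp
  have gg: "g * g = g + 1" unfolding g_def using s5 by (simp add: field_simps)
  have g1: "g > 1" unfolding g_def using s5g by simp
  define l where "l i = ln (r i)" for i
  define t where "t i = l (Suc i) - g * l i" for i
  define K where "K = max \<bar>ln c1\<bar> \<bar>ln c2\<bar>"
  define M where "M = \<bar>t 0\<bar> + K * (g * g)"
  have K0: "K \<ge> 0" unfolding K_def by simp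
  have lrec: "ln c1 + l i + l (Suc i) \<le> l (Suc (Suc i)) \<and> l (Suc (Suc i)) \<le> ln c2 + l i + l (Suc i)" for i
  proof -
    have a: "c1 * r i * r (Suc i) > 0" "c2 * r i * r (Suc i) > 0" using pos c1 c2 by auto
    have "ln (c1 * r i * r (Suc i)) \<le> l (Suc (Suc i))"
      unfolding l_def using rec[of i] a pos by (subst ln_le_cancel_iff) auto
    moreover have "l (Suc (Suc i)) \<le> ln (c2 * r i * r (Suc i))"
      unfolding l_def using rec[of i] a pos by (subst ln_le_cancel_iff) auto
    moreover have "ln (c1 * r i * r (Suc i)) = ln c1 + l i + l (Suc i)" "ln (c2 * r i * r (Suc i)) = ln c2 + l i + l (Suc i)"
      unfolding l_def using pos[of i] pos[of "Suc i"] c1 c2 by (simp_all add: ln_mult_pos)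
    ultimately show ?thesis by simp
  qed
  have trec: "\<bar>t (Suc i) + t i / g\<bar> \<le> K" for i
  proof -
    have inv: "1 / g = g - 1" using gg g1 by (simp add: field_simps)
    have "t i / g = (l (Suc i) - g * l i) * (g - 1)" unfolding t_def using inv
      by (metis times_divide_eq_right mult.right_neutral)
    also have "\<dots> = l (Suc i) * g - l (Suc i) - (g * g - g) * l i" by (simp add: algebra_simps)
    also have "\<dots> = l (Suc i) * g - l (Suc i) - l i" using gg by simp
    finally have "t (Suc i) + t i / g = l (Suc (Suc i)) - l i - l (Suc i)"
      unfolding t_def by (simp add: algebra_simps)
    then show ?thesis using lrec[of i] unfolding K_def by auto
  qed
  have bound: "\<bar>t i\<bar> \<le> M" for i
  proof (induction i)
    case 0 then show ?case unfolding M_def using K0 g1 by simp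
  next
    case (Suc i)
    have "\<bar>t i / g\<bar> \<le> M / g" using Suc g1 by (simp add: abs_divide divide_right_mono)
    then have "\<bar>t (Suc i)\<bar> \<le> K + M / g" using trec[of i] by linarith
    also have "K + M / g \<le> M"
    proof -
      have "M \<ge> K * (g * g)" unfolding M_def by simp
      then have "K \<le> M / (g * g)" using g1 by (simp add: field_simps)
      moreover have "M / (g * g) + M / g = M" using gg g1 by (simp add: field_simps)
      ultimately show ?thesis by linarith
    qed
    finally show ?case .
  qed
  have key: "r (Suc i) = exp (t i) * r i powr g" for i
    unfolding t_def l_def powr_def using pos[of i] pos[of "Suc i"]
    by (simp add: exp_diff[symmetric] exp_add[symmetric])
  show ?thesis
  proof (intro exI conjI allI)
    fix i
    have p: "r i powr g > 0" using pos[of i] by simp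
    have "exp (- M) \<le> exp (t i)" "exp (t i) \<le> exp M" using bound[of i] by auto
    then show "exp (- M) * r i powr ((1 + sqrt 5) / 2) \<le> r (Suc i)"
      "r (Suc i) \<le> exp M * r i powr ((1 + sqrt 5) / 2)"
      using key[of i] p unfolding g_def[symmetric] by (auto intro: mult_right_mono)
  qed auto
qed

end
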